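(* Let ${\cal G}_{sym}$ be the class of scheduling games on related machines with arbitrary priority lists in which all jobs have the same processing-time function (either all $p(t)=b+at$ with $b,a\ge0$, or all $p(t)=\max\{\tau,b-at\}$ with $b,a\ge0$, $\tau>0$). Then $PoA({\cal G}_{sym})=PoS({\cal G}_{sym})=1$; that is, every game in ${\cal G}_{sym}$ has a pure Nash equilibrium and every pure Nash equilibrium has minimum makespan.
   Context: Scheduling game: a finite set $N$ of $n\ge1$ jobs (players) and a set $M$ of machines. Machine $j$ has speed $s_j>0$ and a priority list $\pi_j$, a bijection $N\to\{1,\dots,n\}$; job $u$ has higher priority than $v$ on $j$ iff $\pi_j(u)<\pi_j(v)$. A profile $\sigma\in M^N$ assigns each job to a machine. On machine $j$, the jobs assigned to it, listed in increasing $\pi_j$-order as $i_1,i_2,\dots$, are processed without idle time: $S_{i_1}(\sigma)=0$, $C_{i_k}(\sigma)=S_{i_k}(\sigma)+p_{i_k}(S_{i_k}(\sigma))/s_j$, $S_{i_{k+1}}(\sigma)=C_{i_k}(\sigma)$. The cost of job $i$ is $C_i(\sigma)$. A pure Nash equilibrium (NE) is a profile in which no job can strictly decrease its completion time by unilaterally changing its machine. Makespan $C_{\max}(\sigma)=\max_iC_i(\sigma)$; $OPT(G)=\min_\sigma C_{\max}(\sigma)$ over all profiles. For a game with at least one NE, $PoA(G)=\max_{\sigma\text{ NE}}C_{\max}(\sigma)/OPT(G)$ and $PoS(G)=\min_{\sigma\text{ NE}}C_{\max}(\sigma)/OPT(G)$; for a class, the supremum over its games. *)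

theory Defs
  imports Complex_Main "HOL-Library.FuncSet"
begin

text \<open>Jobs form a finite set N (of some type 'j), machines a finite set M (of type 'm).
  s j is the speed of machine j, pr j the priority list of machine j
  (a bijection N \<rightarrow> {1..n}), p i the processing-time function of job i.\<close>

fun process :: "('j \<Rightarrow> real \<Rightarrow> real) \<Rightarrow> real \<Rightarrow> real \<Rightarrow> 'j list \<Rightarrow> ('j \<times> real) list" where
  "process p sp t [] = []"
| "process p sp t (i # is) = (let c = t + p i t / sp in (i, c) # process p sp c is)"

definition jobs_on :: "'j set \<Rightarrow> ('m \<Rightarrow> 'j \<Rightarrow> nat) \<Rightarrow> ('j \<Rightarrow> 'm) \<Rightarrow> 'm \<Rightarrow> 'j list" where
  "jobs_on N pr sigma j =
     filter (\<lambda>u. sigma u = j) (map (inv_into N (pr j)) [1..<card N + 1])"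

definition compl :: "'j set \<Rightarrow> ('m \<Rightarrow> real) \<Rightarrow> ('m \<Rightarrow> 'j \<Rightarrow> nat) \<Rightarrow> ('j \<Rightarrow> real \<Rightarrow> real)
    \<Rightarrow> ('j \<Rightarrow> 'm) \<Rightarrow> 'j \<Rightarrow> real" where
  "compl N s pr p sigma i =
     the (map_of (process p (s (sigma i)) 0 (jobs_on N pr sigma (sigma i))) i)"

definition makespan :: "'j set \<Rightarrow> ('m \<Rightarrow> real) \<Rightarrow> ('m \<Rightarrow> 'j \<Rightarrow> nat) \<Rightarrow> ('j \<Rightarrow> real \<Rightarrow> real)
    \<Rightarrow> ('j \<Rightarrow> 'm) \<Rightarrow> real" where
  "makespan N s pr p sigma = Max (compl N s pr p sigma ` N)"

definition valid_game :: "'j set \<Rightarrow> 'm set \<Rightarrow> ('m \<Rightarrow> real) \<Rightarrow> ('m \<Rightarrow> 'j \<Rightarrow> nat) \<Rightarrow> bool" where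
  "valid_game N M s pr \<longleftrightarrow> finite N \<and> N \<noteq> {} \<and> finite M \<and> M \<noteq> {} \<and>
     (\<forall>j\<in>M. s j > 0) \<and> (\<forall>j\<in>M. bij_betw (pr j) N {1..card N})"

definition is_NE :: "'j set \<Rightarrow> 'm set \<Rightarrow> ('m \<Rightarrow> real) \<Rightarrow> ('m \<Rightarrow> 'j \<Rightarrow> nat)
    \<Rightarrow> ('j \<Rightarrow> real \<Rightarrow> real) \<Rightarrow> ('j \<Rightarrow> 'm) \<Rightarrow> bool" where
  "is_NE N M s pr p sigma \<longleftrightarrow> sigma \<in> N \<rightarrow> M \<and>
     (\<forall>i\<in>N. \<forall>j'\<in>M. \<not> (compl N s pr p (sigma(i := j')) i < compl N s pr p sigma i))"

definition sym_ptime :: "(real \<Rightarrow> real) \<Rightarrow> bool" where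
  "sym_ptime q \<longleftrightarrow>
     (\<exists>a b. a \<ge> 0 \<and> b \<ge> 0 \<and> q = (\<lambda>t. b + a * t)) \<or>
     (\<exists>a b \<tau>. a \<ge> 0 \<and> b \<ge> 0 \<and> \<tau> > 0 \<and> q = (\<lambda>t. max \<tau> (b - a * t)))"

end

theory Submission
  imports Defs
begin


definition nxt :: "(real \<Rightarrow> real) \<Rightarrow> real \<Rightarrow> real \<Rightarrow> real" where
  "nxt q sp t = t + q t / sp"
definition Tm :: "(real \<Rightarrow> real) \<Rightarrow> real \<Rightarrow> nat \<Rightarrow> real" where
  "Tm q sp k = (nxt q sp ^^ k) 0"
definition rk :: "'j set \<Rightarrow> ('m \<Rightarrow> 'j \<Rightarrow> nat) \<Rightarrow> ('j \<Rightarrow> 'm) \<Rightarrow> 'm \<Rightarrow> 'j \<Rightarrow> nat" where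
  "rk A pr sigma j i = card {u\<in>A. sigma u = j \<and> pr j u < pr j i}"
definition ld :: "'j set \<Rightarrow> ('j \<Rightarrow> 'm) \<Rightarrow> 'm \<Rightarrow> nat" where
  "ld A sigma j = card {u\<in>A. sigma u = j}"

lemma process_map_of:
  "i \<in> set xs \<Longrightarrow> map_of (process (\<lambda>_. q) sp t xs) i
     = Some ((nxt q sp ^^ Suc (length (takeWhile (\<lambda>x. x \<noteq> i) xs))) t)"
proof (induction xs arbitrary: t)
  case Nil then show ?case by simp
next
  case (Cons x xs)
  show ?case
  proof (cases "x = i")
    case True then show ?thesis by (simp add: nxt_def Let_def)
  next
    case False
    with Cons have "i \<in> set xs" by simp
    from Cons.IH[OF this, of "t + q t / sp"] False show ?thesis
      by (simp add: Let_def funpow_Suc_right nxt_def del: funpow.simps)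
  qed
qed

lemma takeWhile_filter_ne:
  "P i \<Longrightarrow> takeWhile (\<lambda>x. x \<noteq> i) (filter P ys) = filter P (takeWhile (\<lambda>x. x \<noteq> i) ys)"
  by (induction ys) auto

lemma compl_eq:
  assumes vg: "valid_game N M s pr" and i: "i \<in> N" and j: "sigma i \<in> M"
  shows "compl N s pr (\<lambda>_. q) sigma i = Tm q (s (sigma i)) (Suc (rk N pr sigma (sigma i) i))"
proof -
  let ?j = "sigma i"
  let ?n = "card N"
  let ?e = "inv_into N (pr ?j)"
  let ?P = "\<lambda>u. sigma u = ?j"
  have bij: "bij_betw (pr ?j) N {1..?n}" using vg j unfolding valid_game_def by auto
  have inj: "inj_on (pr ?j) N" and img: "pr ?j ` N = {1..?n}" using bij by (auto simp: bij_betw_def)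
  define r where "r = pr ?j i"
  have r: "r \<in> {1..?n}" using i img r_def by auto
  have e_pr: "\<And>k. k \<in> {1..?n} \<Longrightarrow> pr ?j (?e k) = k" using img by (metis f_inv_into_f)
  have e_in: "\<And>k. k \<in> {1..?n} \<Longrightarrow> ?e k \<in> N" using img by (metis inv_into_into)
  have er: "?e r = i" using inj i r_def by simp
  have split: "[1..<?n+1] = [1..<r] @ r # [Suc r..<?n+1]"
  proof -
    have "[1..<?n+1] = [1..<r] @ [r..<?n+1]" using r upt_add_eq_append[of 1 r "?n+1-r"] by auto
    also have "[r..<?n+1] = r # [Suc r..<?n+1]" using r by (intro upt_conv_Cons) auto
    finally show ?thesis .
  qed
  have notin: "\<forall>x\<in>set (map ?e [1..<r]). x \<noteq> i"
  proof
    fix x assume "x \<in> set (map ?e [1..<r])"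
    then obtain k where k: "k \<in> {1..<r}" "x = ?e k" by auto
    then have "k \<in> {1..?n}" using r by auto
    then have "pr ?j x = k" using e_pr k by simp
    then show "x \<noteq> i" using k r_def by auto
  qed
  have tw: "takeWhile (\<lambda>x. x \<noteq> i) (map ?e [1..<?n+1]) = map ?e [1..<r]"
  proof -
    have "map ?e [1..<?n+1] = map ?e [1..<r] @ i # map ?e [Suc r..<?n+1]"
      by (subst split) (simp only: map_append list.map er)
    also have "takeWhile (\<lambda>x. x \<noteq> i) \<dots> = map ?e [1..<r] @ takeWhile (\<lambda>x. x \<noteq> i) (i # map ?e [Suc r..<?n+1])"
      by (rule takeWhile_append2) (use notin in blast)
    finally show ?thesis by simp
  qed
  have iset: "i \<in> set (jobs_on N pr sigma ?j)"
  proof -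
    have "r \<in> set [1..<?n+1]" using r by auto
    then have "i \<in> set (map ?e [1..<?n+1])" using er by (metis image_eqI set_map)
    then show ?thesis unfolding jobs_on_def by simp
  qed
  have dist: "distinct (map ?e [1..<r])"
  proof -
    have "inj_on ?e {1..<r}" by (rule inj_on_inv_into) (use img r in auto)
    then show ?thesis by (simp add: distinct_map)
  qed
  have setf: "set (filter ?P (map ?e [1..<r])) = {u\<in>N. sigma u = ?j \<and> pr ?j u < pr ?j i}"
  proof (intro set_eqI iffI)
    fix u assume "u \<in> set (filter ?P (map ?e [1..<r]))"
    then obtain k where k: "k \<in> {1..<r}" "u = ?e k" "?P u" by auto
    then have "k \<in> {1..?n}" using r by auto
    then show "u \<in> {u\<in>N. sigma u = ?j \<and> pr ?j u < pr ?j i}"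
      using e_pr e_in k r_def by auto
  next
    fix u assume u: "u \<in> {u\<in>N. sigma u = ?j \<and> pr ?j u < pr ?j i}"
    then have "pr ?j u \<in> {1..?n}" using img by auto
    then have "pr ?j u \<in> {1..<r}" using u r_def by auto
    moreover have "?e (pr ?j u) = u" using inj u by simp
    ultimately show "u \<in> set (filter ?P (map ?e [1..<r]))" using u by force
  qed
  have len: "length (takeWhile (\<lambda>x. x \<noteq> i) (jobs_on N pr sigma ?j)) = rk N pr sigma ?j i"
  proof -
    have "takeWhile (\<lambda>x. x \<noteq> i) (jobs_on N pr sigma ?j) = filter ?P (map ?e [1..<r])"
      unfolding jobs_on_def by (simp only: takeWhile_filter_ne[of ?P i] tw)
    moreover have "length (filter ?P (map ?e [1..<r])) = card (set (filter ?P (map ?e [1..<r])))"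
      using dist distinct_filter distinct_card by metis
    ultimately show ?thesis unfolding rk_def setf by simp
  qed
  show ?thesis
    unfolding compl_def Tm_def using process_map_of[OF iset, of q "s ?j" 0] len by simp
qed



lemma Tm_props:
  assumes q: "\<forall>t\<ge>0. q t \<ge> 0" and sp: "sp > 0"
  shows "Tm q sp k \<ge> 0 \<and> Tm q sp k \<le> Tm q sp (Suc k)"
proof (induction k)
  case 0 then show ?case using q sp by (simp add: Tm_def nxt_def)
next
  case (Suc k)
  then have "Tm q sp (Suc k) \<ge> 0" by linarith
  then show ?case using q sp by (simp add: Tm_def nxt_def)
qed

lemma Tm_mono:
  assumes q: "\<forall>t\<ge>0. q t \<ge> 0" and sp: "sp > 0"
  shows "mono (Tm q sp)"
  using Tm_props[OF q sp] unfolding mono_def by (metis lift_Suc_mono_le)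

lemma existence_gen:
  fixes F :: "'m \<Rightarrow> nat \<Rightarrow> real" and pr :: "'m \<Rightarrow> 'j \<Rightarrow> nat"
  assumes fN: "finite N" and fM: "finite M" and Mne: "M \<noteq> {}"
    and inj: "\<forall>j\<in>M. inj_on (pr j) N" and mon: "\<forall>j\<in>M. mono (F j)"
  shows "k \<le> card N \<Longrightarrow> \<exists>A sigma. A \<subseteq> N \<and> card A = k \<and> sigma ` A \<subseteq> M \<and>
     (\<forall>u\<in>A. \<forall>w\<in>N-A. pr (sigma u) u < pr (sigma u) w) \<and>
     (\<forall>i\<in>A. \<forall>j\<in>M. F j (Suc (rk A pr sigma j i)) \<ge> F (sigma i) (Suc (rk A pr sigma (sigma i) i))) \<and>
     (\<forall>i\<in>A. \<forall>j\<in>M. F j (Suc (ld A sigma j)) \<ge> F (sigma i) (Suc (rk A pr sigma (sigma i) i)))"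
proof (induction k)
  case 0
  show ?case by (rule exI[of _ "{}"]) auto
next
  case (Suc k)
  then obtain A sigma where A: "A \<subseteq> N" "card A = k" "sigma ` A \<subseteq> M"
    and I2: "\<forall>u\<in>A. \<forall>w\<in>N-A. pr (sigma u) u < pr (sigma u) w"
    and I3: "\<forall>i\<in>A. \<forall>j\<in>M. F j (Suc (rk A pr sigma j i)) \<ge> F (sigma i) (Suc (rk A pr sigma (sigma i) i))"
    and I4: "\<forall>i\<in>A. \<forall>j\<in>M. F j (Suc (ld A sigma j)) \<ge> F (sigma i) (Suc (rk A pr sigma (sigma i) i))"
    by auto
  have fA: "finite A" using A fN finite_subset by blast
  have "N - A \<noteq> {}" using A Suc.prems by auto
  define g where "g j = F j (Suc (ld A sigma j))" for j
  obtain js where js: "js \<in> M" "\<forall>j\<in>M. g js \<le> g j"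
  proof -
    have "Min (g ` M) \<in> g ` M" using fM Mne by simp
    then obtain js where "js \<in> M" "g js = Min (g ` M)" by auto
    moreover have "\<forall>j\<in>M. Min (g ` M) \<le> g j" using fM by simp
    ultimately show ?thesis using that by metis
  qed
  obtain v where v: "v \<in> N - A" "\<forall>w\<in>N-A. pr js v \<le> pr js w"
  proof -
    have fin: "finite (pr js ` (N - A))" using fN by simp
    have "Min (pr js ` (N - A)) \<in> pr js ` (N - A)" using fin \<open>N - A \<noteq> {}\<close> by simp
    then obtain v where "v \<in> N - A" "pr js v = Min (pr js ` (N - A))" by auto
    moreover have "\<forall>w\<in>N-A. Min (pr js ` (N - A)) \<le> pr js w" using fin by simp
    ultimately show ?thesis using that by metis
  qed
  define A' where "A' = insert v A"
  define s' where "s' = sigma(v := js)"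
  have vA: "v \<notin> A" using v by auto
  have fA': "finite A'" using fA A'_def by simp
  have ld_mono: "ld A sigma j \<le> ld A' s' j" for j
    unfolding ld_def
    by (rule card_mono) (use fA' vA in \<open>auto simp: A'_def s'_def\<close>)
  have rk_same: "rk A' pr s' (s' i) i = rk A pr sigma (sigma i) i" if i: "i \<in> A" for i
  proof -
    have iv: "i \<noteq> v" using i vA by auto
    have "pr (sigma i) i < pr (sigma i) v" using I2 i v(1) by blast
    then have "\<not> (s' v = sigma i \<and> pr (sigma i) v < pr (sigma i) i)" by linarith
    then have "{u\<in>A'. s' u = s' i \<and> pr (s' i) u < pr (s' i) i} = {u\<in>A. sigma u = sigma i \<and> pr (sigma i) u < pr (sigma i) i}"
      using iv vA unfolding A'_def s'_def by auto
    then show ?thesis unfolding rk_def by simp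
  qed
  have rk_mono: "rk A pr sigma j i \<le> rk A' pr s' j i" for j i
    unfolding rk_def
    by (rule card_mono) (use fA' vA in \<open>auto simp: A'_def s'_def\<close>)
  have rk_v: "rk A' pr s' j v = ld A sigma j" for j
  proof -
    have "{u\<in>A'. s' u = j \<and> pr j u < pr j v} = {u\<in>A. sigma u = j}"
      using vA I2 v(1) unfolding A'_def s'_def by auto
    then show ?thesis unfolding rk_def ld_def by simp
  qed
  have sv: "s' v = js" unfolding s'_def by simp
  have sA: "\<And>i. i \<in> A \<Longrightarrow> s' i = sigma i" using vA unfolding s'_def by auto
  have ctv: "F (s' v) (Suc (rk A' pr s' (s' v) v)) = g js" using sv rk_v g_def by simp
  have ct_le: "F (s' i) (Suc (rk A' pr s' (s' i) i)) \<le> g js" if "i \<in> A'" for i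
  proof (cases "i = v")
    case True then show ?thesis using ctv by simp
  next
    case False
    then have i: "i \<in> A" using that A'_def by auto
    show ?thesis using I4 i js(1) rk_same[OF i] sA[OF i] g_def by simp
  qed
  show ?case
  proof (intro exI conjI)
    show "A' \<subseteq> N" using A v A'_def by auto
    show "card A' = Suc k" using A fA vA A'_def by simp
    show "s' ` A' \<subseteq> M" using A js unfolding A'_def s'_def by auto
    show "\<forall>u\<in>A'. \<forall>w\<in>N-A'. pr (s' u) u < pr (s' u) w"
    proof (intro ballI)
      fix u w assume u: "u \<in> A'" and w: "w \<in> N - A'"
      show "pr (s' u) u < pr (s' u) w"
      proof (cases "u = v")
        case True
        have "pr js v \<le> pr js w" using v w A'_def by auto
        moreover have "pr js v \<noteq> pr js w"
        proof
          assume "pr js v = pr js w"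
          moreover have "inj_on (pr js) N" using inj js(1) by blast
          moreover have "v \<in> N" "w \<in> N" "v \<noteq> w" using v(1) w A'_def by auto
          ultimately show False by (meson inj_onD)
        qed
        ultimately show ?thesis using True sv by simp
      next
        case False
        then have "u \<in> A" using u A'_def by auto
        then show ?thesis using I2 w sA A'_def by auto
      qed
    qed
    show "\<forall>i\<in>A'. \<forall>j\<in>M. F j (Suc (rk A' pr s' j i)) \<ge> F (s' i) (Suc (rk A' pr s' (s' i) i))"
    proof (intro ballI)
      fix i j assume i: "i \<in> A'" and j: "j \<in> M"
      show "F j (Suc (rk A' pr s' j i)) \<ge> F (s' i) (Suc (rk A' pr s' (s' i) i))"
      proof (cases "i = v")
        case True
        then show ?thesis using ctv rk_v js j g_def by simp
      next
        case False
        then have i: "i \<in> A" using i A'_def by auto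
        have "F j (Suc (rk A pr sigma j i)) \<le> F j (Suc (rk A' pr s' j i))"
          using mon j rk_mono by (simp add: monoD)
        then show ?thesis using I3 i j rk_same[OF i] sA[OF i] by fastforce
      qed
    qed
    show "\<forall>i\<in>A'. \<forall>j\<in>M. F j (Suc (ld A' s' j)) \<ge> F (s' i) (Suc (rk A' pr s' (s' i) i))"
    proof (intro ballI)
      fix i j assume i: "i \<in> A'" and j: "j \<in> M"
      have "F j (Suc (ld A sigma j)) \<le> F j (Suc (ld A' s' j))"
        using mon j ld_mono by (simp add: monoD)
      moreover have "g js \<le> g j" using js j by simp
      ultimately show "F j (Suc (ld A' s' j)) \<ge> F (s' i) (Suc (rk A' pr s' (s' i) i))"
        using ct_le[OF i] g_def[of j] by linarith
    qed
  qed
qed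



lemma sym_nonneg: "sym_ptime q \<Longrightarrow> \<forall>t\<ge>0. q t \<ge> (0::real)"
  unfolding sym_ptime_def by (auto intro: add_nonneg_nonneg mult_nonneg_nonneg)

lemma rk_upd: "rk N pr (sigma(i := j)) j i = rk N pr sigma j i"
proof -
  have "{u\<in>N. (sigma(i := j)) u = j \<and> pr j u < pr j i} = {u\<in>N. sigma u = j \<and> pr j u < pr j i}"
    by auto
  then show ?thesis unfolding rk_def by simp
qed

lemma sum_ld:
  assumes "finite N" "finite M" "sigma \<in> N \<rightarrow> M"
  shows "(\<Sum>j\<in>M. ld N sigma j) = card N"
proof -
  have "(\<Sum>j\<in>M. \<Sum>u\<in>{x. x \<in> N \<and> sigma x = j}. (1::nat)) = (\<Sum>u\<in>N. 1)"
    by (rule sum.group) (use assms in auto)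
  then show ?thesis unfolding ld_def by simp
qed

context
  fixes N :: "'j set" and M :: "'m set" and s :: "'m \<Rightarrow> real"
    and pr :: "'m \<Rightarrow> 'j \<Rightarrow> nat" and q :: "real \<Rightarrow> real"
  assumes vg: "valid_game N M s pr" and sq: "sym_ptime q"
begin

lemma qn: "\<forall>t\<ge>0. q t \<ge> 0" using sym_nonneg[OF sq] .
lemma fN: "finite N" and fM: "finite M" and Nne: "N \<noteq> {}" and Mne: "M \<noteq> {}"
  and spos: "\<And>j. j \<in> M \<Longrightarrow> s j > 0"
  and injpr: "\<And>j. j \<in> M \<Longrightarrow> inj_on (pr j) N"
  using vg unfolding valid_game_def bij_betw_def by auto

lemma Tmono: "j \<in> M \<Longrightarrow> mono (Tm q (s j))"
  using Tm_mono[OF qn spos] .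

lemma Tnonneg: "j \<in> M \<Longrightarrow> Tm q (s j) k \<ge> 0"
  using Tm_props[OF qn spos] by blast

lemma compl_nonneg: "i \<in> N \<Longrightarrow> sigma i \<in> M \<Longrightarrow> compl N s pr (\<lambda>_. q) sigma i \<ge> 0"
  using compl_eq[OF vg] Tnonneg by simp

lemma makespan_ge: "sigma \<in> N \<rightarrow> M \<Longrightarrow> i \<in> N \<Longrightarrow> compl N s pr (\<lambda>_. q) sigma i \<le> makespan N s pr (\<lambda>_. q) sigma"
  unfolding makespan_def using fN by simp

lemma makespan_in: "\<exists>i\<in>N. makespan N s pr (\<lambda>_. q) sigma = compl N s pr (\<lambda>_. q) sigma i"
proof -
  have "Max (compl N s pr (\<lambda>_. q) sigma ` N) \<in> compl N s pr (\<lambda>_. q) sigma ` N"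
    using fN Nne by simp
  then show ?thesis unfolding makespan_def by auto
qed

lemma makespan_ld:
  assumes sig: "sigma \<in> N \<rightarrow> M" and j: "j \<in> M"
  shows "Tm q (s j) (ld N sigma j) \<le> makespan N s pr (\<lambda>_. q) sigma"
proof (cases "ld N sigma j = 0")
  case True
  obtain i where i: "i \<in> N" using Nne by auto
  have "Tm q (s j) 0 = 0" by (simp add: Tm_def)
  moreover have "0 \<le> compl N s pr (\<lambda>_. q) sigma i" using compl_nonneg i sig by auto
  ultimately show ?thesis using makespan_ge[OF sig i] True by simp
next
  case False
  define S where "S = {u\<in>N. sigma u = j}"
  have fS: "finite S" using fN S_def by simp
  have "ld N sigma j = card S" by (simp add: ld_def S_def)
  then have Sne: "S \<noteq> {}" using False by auto
  have "Max (pr j ` S) \<in> pr j ` S" using fS Sne by simp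
  then obtain i where i: "i \<in> S" "pr j i = Max (pr j ` S)" by auto
  have imax: "\<forall>u\<in>S. pr j u \<le> pr j i" using i fS by simp
  have "{u\<in>N. sigma u = j \<and> pr j u < pr j i} = S - {i}"
  proof (intro set_eqI iffI)
    fix u assume "u \<in> {u\<in>N. sigma u = j \<and> pr j u < pr j i}"
    then show "u \<in> S - {i}" using S_def by auto
  next
    fix u assume u: "u \<in> S - {i}"
    have uN: "u \<in> N" "i \<in> N" "u \<noteq> i" using u i S_def by auto
    have "pr j u \<noteq> pr j i"
    proof
      assume "pr j u = pr j i"
      then have "u = i" using inj_onD[OF injpr[OF j]] uN by blast
      then show False using uN by simp
    qed
    then show "u \<in> {u\<in>N. sigma u = j \<and> pr j u < pr j i}" using u imax S_def
      using le_neq_implies_less by auto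
  qed
  then have "rk N pr sigma j i = ld N sigma j - 1"
    unfolding rk_def ld_def S_def[symmetric] using i fS by simp
  then have "Suc (rk N pr sigma j i) = ld N sigma j" using False by simp
  moreover have "compl N s pr (\<lambda>_. q) sigma i = Tm q (s j) (Suc (rk N pr sigma j i))"
    using compl_eq[OF vg, of i sigma q] i j S_def by simp
  moreover have "i \<in> N" using i S_def by simp
  ultimately show ?thesis using makespan_ge[OF sig] by metis
qed

lemma NE_exists: "\<exists>sigma. is_NE N M s pr (\<lambda>_. q) sigma"
proof -
  have "\<exists>A sigma. A \<subseteq> N \<and> card A = card N \<and> sigma ` A \<subseteq> M \<and>
     (\<forall>u\<in>A. \<forall>w\<in>N-A. pr (sigma u) u < pr (sigma u) w) \<and>
     (\<forall>i\<in>A. \<forall>j\<in>M. Tm q (s j) (Suc (rk A pr sigma j i)) \<ge> Tm q (s (sigma i)) (Suc (rk A pr sigma (sigma i) i))) \<and>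
     (\<forall>i\<in>A. \<forall>j\<in>M. Tm q (s j) (Suc (ld A sigma j)) \<ge> Tm q (s (sigma i)) (Suc (rk A pr sigma (sigma i) i)))"
    by (rule existence_gen[OF fN fM Mne, where F = "\<lambda>j. Tm q (s j)" and pr = pr]) (use injpr Tmono in auto)
  then obtain A sigma where A: "A \<subseteq> N" "card A = card N" "sigma ` A \<subseteq> M"
    and I3: "\<forall>i\<in>A. \<forall>j\<in>M. Tm q (s j) (Suc (rk A pr sigma j i)) \<ge> Tm q (s (sigma i)) (Suc (rk A pr sigma (sigma i) i))"
    by blast
  have AN: "A = N" using A fN card_subset_eq by blast
  have sig: "sigma \<in> N \<rightarrow> M" using A AN by auto
  have "is_NE N M s pr (\<lambda>_. q) sigma"
    unfolding is_NE_def
  proof (intro conjI sig ballI)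
    fix i j' assume i: "i \<in> N" and j': "j' \<in> M"
    have "compl N s pr (\<lambda>_. q) (sigma(i := j')) i = Tm q (s j') (Suc (rk N pr (sigma(i := j')) j' i))"
      using compl_eq[OF vg i, of "sigma(i := j')" q] j' by simp
    also have "\<dots> = Tm q (s j') (Suc (rk N pr sigma j' i))" by (simp only: rk_upd)
    finally have e1: "compl N s pr (\<lambda>_. q) (sigma(i := j')) i = Tm q (s j') (Suc (rk N pr sigma j' i))" .
    have e2: "compl N s pr (\<lambda>_. q) sigma i = Tm q (s (sigma i)) (Suc (rk N pr sigma (sigma i) i))"
      using compl_eq[OF vg i, of sigma q] sig i by auto
    have "Tm q (s j') (Suc (rk N pr sigma j' i)) \<ge> Tm q (s (sigma i)) (Suc (rk N pr sigma (sigma i) i))"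
      using I3 AN i j' by blast
    then show "\<not> compl N s pr (\<lambda>_. q) (sigma(i := j')) i < compl N s pr (\<lambda>_. q) sigma i"
      unfolding e1 e2 by linarith
  qed
  then show ?thesis by blast
qed

lemma NE_opt:
  assumes ne: "is_NE N M s pr (\<lambda>_. q) sigma" and sig': "sigma' \<in> N \<rightarrow> M"
  shows "makespan N s pr (\<lambda>_. q) sigma \<le> makespan N s pr (\<lambda>_. q) sigma'"
proof (rule ccontr)
  assume contra: "\<not> ?thesis"
  let ?C = "makespan N s pr (\<lambda>_. q) sigma"
  let ?C' = "makespan N s pr (\<lambda>_. q) sigma'"
  have sig: "sigma \<in> N \<rightarrow> M" using ne unfolding is_NE_def by (rule conjunct1)
  obtain i0 where i0: "i0 \<in> N" "?C = compl N s pr (\<lambda>_. q) sigma i0" using makespan_in by blast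
  define j0 where "j0 = sigma i0"
  have j0: "j0 \<in> M" using sig i0 j0_def by auto
  define r0 where "r0 = rk N pr sigma j0 i0"
  have C: "?C = Tm q (s j0) (Suc r0)" using compl_eq[OF vg i0(1), of sigma q] i0 j0 j0_def r0_def by simp
  have r0: "r0 < ld N sigma j0"
  proof -
    have "{u\<in>N. sigma u = j0 \<and> pr j0 u < pr j0 i0} \<subset> {u\<in>N. sigma u = j0}"
      using i0(1) j0_def by auto
    then show ?thesis unfolding r0_def rk_def ld_def
      by (rule psubset_card_mono[rotated]) (simp add: fN)
  qed
  have le0: "ld N sigma' j0 < ld N sigma j0"
  proof (rule ccontr)
    assume "\<not> ?thesis"
    then have "Suc r0 \<le> ld N sigma' j0" using r0 by simp
    then have "Tm q (s j0) (Suc r0) \<le> Tm q (s j0) (ld N sigma' j0)" using Tmono[OF j0] by (simp add: monoD)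
    then show False using makespan_ld[OF sig' j0] C contra by linarith
  qed
  have le: "ld N sigma' j \<le> ld N sigma j" if j: "j \<in> M" for j
  proof (cases "j = j0")
    case True then show ?thesis using le0 by simp
  next
    case False
    have "\<forall>i\<in>N. \<forall>j'\<in>M. \<not> (compl N s pr (\<lambda>_. q) (sigma(i := j')) i < compl N s pr (\<lambda>_. q) sigma i)"
      using ne unfolding is_NE_def by (rule conjunct2)
    then have "\<not> compl N s pr (\<lambda>_. q) (sigma(i0 := j)) i0 < compl N s pr (\<lambda>_. q) sigma i0"
      using i0(1) j by blast
    moreover have "compl N s pr (\<lambda>_. q) (sigma(i0 := j)) i0 = Tm q (s j) (Suc (rk N pr (sigma(i0 := j)) j i0))"
      using compl_eq[OF vg i0(1), of "sigma(i0 := j)" q] j by simp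
    moreover have "rk N pr (sigma(i0 := j)) j i0 = rk N pr sigma j i0" by (rule rk_upd)
    ultimately have ge: "Tm q (s j) (Suc (rk N pr sigma j i0)) \<ge> ?C" using i0 by (simp add: not_less)
    have "rk N pr sigma j i0 \<le> ld N sigma j"
      unfolding rk_def ld_def by (rule card_mono) (simp add: fN, blast)
    then have "Tm q (s j) (Suc (rk N pr sigma j i0)) \<le> Tm q (s j) (Suc (ld N sigma j))"
      using Tmono[OF j] by (simp add: monoD)
    then have A: "Tm q (s j) (Suc (ld N sigma j)) \<ge> ?C" using ge by linarith
    show ?thesis
    proof (rule ccontr)
      assume "\<not> ?thesis"
      then have "Suc (ld N sigma j) \<le> ld N sigma' j" by simp
      then have "Tm q (s j) (Suc (ld N sigma j)) \<le> Tm q (s j) (ld N sigma' j)"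
        using Tmono[OF j] by (simp add: monoD)
      then show False using makespan_ld[OF sig' j] A contra by linarith
    qed
  qed
  have "(\<Sum>j\<in>M. ld N sigma' j) < (\<Sum>j\<in>M. ld N sigma j)"
    by (rule sum_strict_mono_ex1[OF fM]) (use le le0 j0 in blast)+
  then show False using sum_ld[OF fN fM sig] sum_ld[OF fN fM sig'] by simp
qed

end

theorem theorem8:
  fixes N :: "'j set" and M :: "'m set" and s :: "'m \<Rightarrow> real"
    and pr :: "'m \<Rightarrow> 'j \<Rightarrow> nat" and q :: "real \<Rightarrow> real"
  assumes "valid_game N M s pr" and "sym_ptime q"
  shows "(\<exists>sigma. is_NE N M s pr (\<lambda>_. q) sigma) \<and>
         (\<forall>sigma. is_NE N M s pr (\<lambda>_. q) sigma \<longrightarrow>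
            (\<forall>sigma'\<in>N \<rightarrow> M. makespan N s pr (\<lambda>_. q) sigma \<le> makespan N s pr (\<lambda>_. q) sigma'))"
  using NE_exists[OF assms] NE_opt[OF assms] by blast

end
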